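(* Let $k$ be a field, $n\ge 1$, and let $Q_H$ be the quiver with vertices $x_1,\ldots,x_{n+1},y_1,\ldots,y_n$ and arrows $r_i:x_i\to y_i$, $l_i:y_i\to x_{i+1}$, $a_i:x_i\to x_{i+1}$ for $i=1,\ldots,n$. Put $m_{ij}=a_{i+1}\cdots a_{j-1}$ (for $0\le i<j$, with $m_{i,i+1}$ the stationary path at $x_{i+1}$), $A_i=r_il_i$, $T_i=A_ia_i^{-1}$ and $\alpha_i=m_{0i}T_im_{0i}^{-1}$, a closed walk at $x_1$. Let $1\le i<j\le n$ and let $I$ be an admissible ideal of $kQ_H$ in which $a_im_{ij}A_j+A_im_{ij}a_j$ is a minimal relation. Then $\tilde\alpha_i=\tilde\alpha_j$ in $\pi_1(Q_H,I,x_1)$.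
   Context: An ideal $I$ of $kQ$ is admissible if $F^m\subseteq I\subseteq F^2$ for some $m\ge2$, $F$ the arrow ideal. For vertices $x,y$, $I(x,y)=e_x(kQ)e_y\cap I$; a relation $\sum_{i=1}^{r}\lambda_i w_i\in I(x,y)$ ($\lambda_i\in k^*$, $w_i$ distinct paths $x\to y$) is minimal if $r\ge2$ and no proper nonempty subsum lies in $I(x,y)$. Walks are composable sequences of arrows and formal inverses $\alpha^{-1}$. Homotopy $\sim$ is the smallest equivalence relation on walks with $\alpha\alpha^{-1}\sim e_{s(\alpha)}$, $\alpha^{-1}\alpha\sim e_{t(\alpha)}$, $w_i\sim w_j$ for paths occurring in a common minimal relation of $I$, and $u\sim v\Rightarrow wuw'\sim wvw'$. $\pi_1(Q,I,x_1)$ is the group of homotopy classes $\tilde w$ of closed walks at $x_1$. *)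

theory Defs
  imports Main
begin

text \<open>A path is a pair (start vertex, list of arrows), composed left to right,
  so (x, []) is the stationary path e_x.\<close>

fun path_ok :: "'v set \<Rightarrow> 'a set \<Rightarrow> ('a \<Rightarrow> 'v) \<Rightarrow> ('a \<Rightarrow> 'v) \<Rightarrow> 'v \<Rightarrow> 'a list \<Rightarrow> bool" where
  "path_ok Vs Ar src tgt v [] = (v \<in> Vs)"
| "path_ok Vs Ar src tgt v (a # as) = (v \<in> Vs \<and> a \<in> Ar \<and> src a = v \<and> path_ok Vs Ar src tgt (tgt a) as)"

fun path_end :: "('a \<Rightarrow> 'v) \<Rightarrow> 'v \<Rightarrow> 'a list \<Rightarrow> 'v" where
  "path_end tgt v [] = v"
| "path_end tgt v (a # as) = path_end tgt (tgt a) as"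

definition is_path :: "'v set \<Rightarrow> 'a set \<Rightarrow> ('a \<Rightarrow> 'v) \<Rightarrow> ('a \<Rightarrow> 'v) \<Rightarrow> 'v \<times> 'a list \<Rightarrow> bool" where
  "is_path Vs Ar src tgt p = path_ok Vs Ar src tgt (fst p) (snd p)"

definition supp :: "('p \<Rightarrow> 'k::zero) \<Rightarrow> 'p set" where
  "supp f = {p. f p \<noteq> 0}"

definition path_alg :: "'v set \<Rightarrow> 'a set \<Rightarrow> ('a \<Rightarrow> 'v) \<Rightarrow> ('a \<Rightarrow> 'v) \<Rightarrow> (('v \<times> 'a list) \<Rightarrow> 'k::field) set" where
  "path_alg Vs Ar src tgt = {f. finite (supp f) \<and> (\<forall>p \<in> supp f. is_path Vs Ar src tgt p)}"

text \<open>Multiplication in kQ (concatenation of paths, extended bilinearly).\<close>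

definition pmult :: "('a \<Rightarrow> 'v) \<Rightarrow> (('v \<times> 'a list) \<Rightarrow> 'k::field) \<Rightarrow> (('v \<times> 'a list) \<Rightarrow> 'k) \<Rightarrow> ('v \<times> 'a list) \<Rightarrow> 'k" where
  "pmult tgt f g p = (\<Sum>k \<in> {0..length (snd p)}.
      f (fst p, take k (snd p)) * g (path_end tgt (fst p) (take k (snd p)), drop k (snd p)))"

definition is_ideal :: "'v set \<Rightarrow> 'a set \<Rightarrow> ('a \<Rightarrow> 'v) \<Rightarrow> ('a \<Rightarrow> 'v) \<Rightarrow> (('v \<times> 'a list) \<Rightarrow> 'k::field) set \<Rightarrow> bool" where
  "is_ideal Vs Ar src tgt I \<longleftrightarrow>
     I \<subseteq> path_alg Vs Ar src tgt \<and> (\<lambda>_. 0) \<in> I \<and>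
     (\<forall>f \<in> I. \<forall>g \<in> I. (\<lambda>p. f p + g p) \<in> I) \<and>
     (\<forall>f \<in> I. (\<lambda>p. - f p) \<in> I) \<and>
     (\<forall>f \<in> path_alg Vs Ar src tgt. \<forall>g \<in> I. pmult tgt f g \<in> I \<and> pmult tgt g f \<in> I)"

definition arrow_ideal_pow :: "'v set \<Rightarrow> 'a set \<Rightarrow> ('a \<Rightarrow> 'v) \<Rightarrow> ('a \<Rightarrow> 'v) \<Rightarrow> nat \<Rightarrow> (('v \<times> 'a list) \<Rightarrow> 'k::field) set" where
  "arrow_ideal_pow Vs Ar src tgt m =
     {f \<in> path_alg Vs Ar src tgt. \<forall>p \<in> supp f. m \<le> length (snd p)}"

definition admissible :: "'v set \<Rightarrow> 'a set \<Rightarrow> ('a \<Rightarrow> 'v) \<Rightarrow> ('a \<Rightarrow> 'v) \<Rightarrow> (('v \<times> 'a list) \<Rightarrow> 'k::field) set \<Rightarrow> bool" where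
  "admissible Vs Ar src tgt I \<longleftrightarrow> is_ideal Vs Ar src tgt I \<and>
     (\<exists>m\<ge>2. arrow_ideal_pow Vs Ar src tgt m \<subseteq> I \<and> I \<subseteq> arrow_ideal_pow Vs Ar src tgt 2)"

definition minimal_relation :: "'v set \<Rightarrow> 'a set \<Rightarrow> ('a \<Rightarrow> 'v) \<Rightarrow> ('a \<Rightarrow> 'v) \<Rightarrow> (('v \<times> 'a list) \<Rightarrow> 'k::field) set \<Rightarrow> (('v \<times> 'a list) \<Rightarrow> 'k) \<Rightarrow> bool" where
  "minimal_relation Vs Ar src tgt I \<rho> \<longleftrightarrow>
     \<rho> \<in> I \<and>
     (\<exists>x y. \<forall>p \<in> supp \<rho>. fst p = x \<and> path_end tgt (fst p) (snd p) = y) \<and>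
     2 \<le> card (supp \<rho>) \<and>
     (\<forall>T. T \<subset> supp \<rho> \<and> T \<noteq> {} \<longrightarrow> (\<lambda>p. if p \<in> T then \<rho> p else 0) \<notin> I)"

text \<open>A letter (a, True) is the arrow a, (a, False) is its formal inverse a^-1.
  A walk is a pair (start vertex, list of letters).\<close>

definition lsrc :: "('a \<Rightarrow> 'v) \<Rightarrow> ('a \<Rightarrow> 'v) \<Rightarrow> 'a \<times> bool \<Rightarrow> 'v" where
  "lsrc src tgt l = (if snd l then src (fst l) else tgt (fst l))"

definition ltgt :: "('a \<Rightarrow> 'v) \<Rightarrow> ('a \<Rightarrow> 'v) \<Rightarrow> 'a \<times> bool \<Rightarrow> 'v" where
  "ltgt src tgt l = (if snd l then tgt (fst l) else src (fst l))"

fun walk_ok :: "'v set \<Rightarrow> 'a set \<Rightarrow> ('a \<Rightarrow> 'v) \<Rightarrow> ('a \<Rightarrow> 'v) \<Rightarrow> 'v \<Rightarrow> ('a \<times> bool) list \<Rightarrow> bool" where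
  "walk_ok Vs Ar src tgt v [] = (v \<in> Vs)"
| "walk_ok Vs Ar src tgt v (l # ls) = (v \<in> Vs \<and> fst l \<in> Ar \<and> lsrc src tgt l = v \<and>
       walk_ok Vs Ar src tgt (ltgt src tgt l) ls)"

fun walk_end :: "('a \<Rightarrow> 'v) \<Rightarrow> ('a \<Rightarrow> 'v) \<Rightarrow> 'v \<Rightarrow> ('a \<times> bool) list \<Rightarrow> 'v" where
  "walk_end src tgt v [] = v"
| "walk_end src tgt v (l # ls) = walk_end src tgt (ltgt src tgt l) ls"

definition path_walk :: "'v \<times> 'a list \<Rightarrow> 'v \<times> ('a \<times> bool) list" where
  "path_walk p = (fst p, map (\<lambda>a. (a, True)) (snd p))"

inductive htpy :: "'v set \<Rightarrow> 'a set \<Rightarrow> ('a \<Rightarrow> 'v) \<Rightarrow> ('a \<Rightarrow> 'v) \<Rightarrow> (('v \<times> 'a list) \<Rightarrow> 'k::field) set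
    \<Rightarrow> 'v \<times> ('a \<times> bool) list \<Rightarrow> 'v \<times> ('a \<times> bool) list \<Rightarrow> bool"
  for Vs Ar src tgt I where
  refl: "walk_ok Vs Ar src tgt v u \<Longrightarrow> htpy Vs Ar src tgt I (v, u) (v, u)"
| sym: "htpy Vs Ar src tgt I u v \<Longrightarrow> htpy Vs Ar src tgt I v u"
| trans: "htpy Vs Ar src tgt I u v \<Longrightarrow> htpy Vs Ar src tgt I v w \<Longrightarrow> htpy Vs Ar src tgt I u w"
| cancel1: "a \<in> Ar \<Longrightarrow> src a \<in> Vs \<Longrightarrow> tgt a \<in> Vs \<Longrightarrow>
     htpy Vs Ar src tgt I (src a, [(a, True), (a, False)]) (src a, [])"
| cancel2: "a \<in> Ar \<Longrightarrow> src a \<in> Vs \<Longrightarrow> tgt a \<in> Vs \<Longrightarrow>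
     htpy Vs Ar src tgt I (tgt a, [(a, False), (a, True)]) (tgt a, [])"
| rel: "minimal_relation Vs Ar src tgt I \<rho> \<Longrightarrow> p \<in> supp \<rho> \<Longrightarrow> q \<in> supp \<rho> \<Longrightarrow>
     htpy Vs Ar src tgt I (path_walk p) (path_walk q)"
| ctx: "htpy Vs Ar src tgt I (v, u) (v', u') \<Longrightarrow>
     walk_ok Vs Ar src tgt x (w @ u @ w') \<Longrightarrow> walk_ok Vs Ar src tgt x (w @ u' @ w') \<Longrightarrow>
     walk_end src tgt x w = v \<Longrightarrow> walk_end src tgt x w = v' \<Longrightarrow>
     htpy Vs Ar src tgt I (x, w @ u @ w') (x, w @ u' @ w')"

definition hclass :: "'v set \<Rightarrow> 'a set \<Rightarrow> ('a \<Rightarrow> 'v) \<Rightarrow> ('a \<Rightarrow> 'v) \<Rightarrow> (('v \<times> 'a list) \<Rightarrow> 'k::field) set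
    \<Rightarrow> 'v \<times> ('a \<times> bool) list \<Rightarrow> ('v \<times> ('a \<times> bool) list) set" where
  "hclass Vs Ar src tgt I w = {w'. htpy Vs Ar src tgt I w w'}"

definition fund_group_carrier :: "'v set \<Rightarrow> 'a set \<Rightarrow> ('a \<Rightarrow> 'v) \<Rightarrow> ('a \<Rightarrow> 'v) \<Rightarrow> (('v \<times> 'a list) \<Rightarrow> 'k::field) set
    \<Rightarrow> 'v \<Rightarrow> ('v \<times> ('a \<times> bool) list) set set" where
  "fund_group_carrier Vs Ar src tgt I x =
     {hclass Vs Ar src tgt I (x, w) | w. walk_ok Vs Ar src tgt x w \<and> walk_end src tgt x w = x}"

datatype hvert = X nat | Y nat
datatype harrow = R nat | L nat | Aa nat

fun hsrc :: "harrow \<Rightarrow> hvert" where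
  "hsrc (R i) = X i" | "hsrc (L i) = Y i" | "hsrc (Aa i) = X i"

fun htgt :: "harrow \<Rightarrow> hvert" where
  "htgt (R i) = Y i" | "htgt (L i) = X (Suc i)" | "htgt (Aa i) = X (Suc i)"

definition QH_V :: "nat \<Rightarrow> hvert set" where
  "QH_V n = {X i | i. 1 \<le> i \<and> i \<le> n + 1} \<union> {Y i | i. 1 \<le> i \<and> i \<le> n}"

definition QH_A :: "nat \<Rightarrow> harrow set" where
  "QH_A n = {R i | i. 1 \<le> i \<and> i \<le> n} \<union> {L i | i. 1 \<le> i \<and> i \<le> n} \<union> {Aa i | i. 1 \<le> i \<and> i \<le> n}"

definition m_path :: "nat \<Rightarrow> nat \<Rightarrow> harrow list" where
  "m_path i j = map Aa [Suc i..<j]"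

definition A_path :: "nat \<Rightarrow> harrow list" where
  "A_path i = [R i, L i]"

definition fwd :: "harrow list \<Rightarrow> (harrow \<times> bool) list" where
  "fwd ps = map (\<lambda>a. (a, True)) ps"

definition inv_walk :: "(harrow \<times> bool) list \<Rightarrow> (harrow \<times> bool) list" where
  "inv_walk ws = rev (map (\<lambda>l. (fst l, \<not> snd l)) ws)"

definition T_walk :: "nat \<Rightarrow> (harrow \<times> bool) list" where
  "T_walk i = fwd (A_path i) @ [(Aa i, False)]"

definition alpha_walk :: "nat \<Rightarrow> hvert \<times> (harrow \<times> bool) list" where
  "alpha_walk i = (X 1, fwd (m_path 0 i) @ T_walk i @ inv_walk (fwd (m_path 0 i)))"

definition hrel :: "nat \<Rightarrow> nat \<Rightarrow> (hvert \<times> harrow list) \<Rightarrow> 'k::field" where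
  "hrel i j p = (if p = (X i, [Aa i] @ m_path i j @ A_path j) \<or>
                    p = (X i, A_path i @ m_path i j @ [Aa j]) then 1 else 0)"

end

theory Submission
  imports Defs
begin

lemma walk_ok_start: "walk_ok Vs Ar src tgt v ws \<Longrightarrow> v \<in> Vs"
  by (cases ws) auto

lemma walk_ok_append:
  "walk_ok Vs Ar src tgt v (xs @ ys) \<longleftrightarrow> walk_ok Vs Ar src tgt v xs \<and> walk_ok Vs Ar src tgt (walk_end src tgt v xs) ys"
  by (induction xs arbitrary: v) (auto dest: walk_ok_start)

lemma walk_end_append: "walk_end src tgt v (xs @ ys) = walk_end src tgt (walk_end src tgt v xs) ys"
  by (induction xs arbitrary: v) auto

lemma walk_ok_end: "walk_ok Vs Ar src tgt v ws \<Longrightarrow> walk_end src tgt v ws \<in> Vs"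
  by (induction ws arbitrary: v) auto

lemma inv_walk_cons: "inv_walk (l # ls) = inv_walk ls @ [(fst l, \<not> snd l)]"
  by (simp add: inv_walk_def)

lemma inv_walk_append: "inv_walk (xs @ ys) = inv_walk ys @ inv_walk xs"
  by (simp add: inv_walk_def)

lemma walk_ok_inv:
  "walk_ok Vs Ar hsrc htgt u ws \<Longrightarrow>
   walk_ok Vs Ar hsrc htgt (walk_end hsrc htgt u ws) (inv_walk ws) \<and>
   walk_end hsrc htgt (walk_end hsrc htgt u ws) (inv_walk ws) = u"
proof (induction ws arbitrary: u)
  case Nil then show ?case by (simp add: inv_walk_def)
next
  case (Cons l ls)
  then have h: "walk_ok Vs Ar hsrc htgt (ltgt hsrc htgt l) ls" "u \<in> Vs" "fst l \<in> Ar" "lsrc hsrc htgt l = u"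
    by auto
  from Cons.IH[OF h(1)] show ?case using h
    by (auto simp: inv_walk_cons walk_ok_append walk_end_append lsrc_def ltgt_def dest: walk_ok_start)
qed

lemma fwd_append: "fwd (xs @ ys) = fwd xs @ fwd ys"
  by (simp add: fwd_def)

lemma cancel_fwd:
  "walk_ok Vs Ar hsrc htgt x (w @ fwd q @ inv_walk (fwd q) @ w') \<Longrightarrow>
   htpy Vs Ar hsrc htgt I (x, w @ fwd q @ inv_walk (fwd q) @ w') (x, w @ w')"
proof (induction q arbitrary: w' rule: rev_induct)
  case Nil
  then show ?case by (simp add: fwd_def inv_walk_def htpy.refl)
next
  case (snoc a q)
  define w0 where "w0 = w @ fwd q"
  define w0' where "w0' = inv_walk (fwd q) @ w'"
  have eq: "w @ fwd (q @ [a]) @ inv_walk (fwd (q @ [a])) @ w' = w0 @ [(a,True),(a,False)] @ w0'"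
    by (simp add: w0_def w0'_def fwd_append inv_walk_append) (simp add: fwd_def inv_walk_def)
  have wk: "walk_ok Vs Ar hsrc htgt x (w0 @ [(a,True),(a,False)] @ w0')"
    using snoc.prems eq by simp
  then have w1: "walk_ok Vs Ar hsrc htgt x w0" and
    w2: "walk_ok Vs Ar hsrc htgt (walk_end hsrc htgt x w0) ([(a,True),(a,False)] @ w0')"
    by (auto simp: walk_ok_append)
  then have ends: "walk_end hsrc htgt x w0 = hsrc a" "a \<in> Ar" "hsrc a \<in> Vs" "htgt a \<in> Vs"
    by (auto simp: lsrc_def ltgt_def dest: walk_ok_start)
  have w3: "walk_ok Vs Ar hsrc htgt (hsrc a) w0'"
    using w2 ends by (simp add: lsrc_def ltgt_def)
  have wk2: "walk_ok Vs Ar hsrc htgt x (w0 @ [] @ w0')"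
    using w1 w3 ends by (simp add: walk_ok_append)
  have c: "htpy Vs Ar hsrc htgt I (hsrc a, [(a, True), (a, False)]) (hsrc a, [])"
    using ends by (intro htpy.cancel1) auto
  have s1: "htpy Vs Ar hsrc htgt I (x, w0 @ [(a,True),(a,False)] @ w0') (x, w0 @ [] @ w0')"
    by (rule htpy.ctx[OF c wk wk2 ends(1) ends(1)])
  have s2: "htpy Vs Ar hsrc htgt I (x, w @ fwd q @ inv_walk (fwd q) @ w') (x, w @ w')"
    using wk2 by (intro snoc.IH) (simp add: w0_def w0'_def)
  show ?case unfolding eq using htpy.trans[OF s1] s2 by (simp add: w0_def w0'_def)
qed

lemma walk_aa:
  assumes "1 \<le> a" "a \<le> b" "b \<le> n + 1"
  shows "walk_ok (QH_V n) (QH_A n) hsrc htgt (X a) (fwd (map Aa [a..<b])) \<and>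
         walk_end hsrc htgt (X a) (fwd (map Aa [a..<b])) = X b"
  using assms
proof (induction b)
  case 0 then show ?case by simp
next
  case (Suc b)
  show ?case
  proof (cases "a = Suc b")
    case True
    then show ?thesis using Suc.prems by (simp add: fwd_def QH_V_def)
  next
    case False
    then have "a \<le> b" using Suc.prems by simp
    with Suc.IH Suc.prems have ih: "walk_ok (QH_V n) (QH_A n) hsrc htgt (X a) (fwd (map Aa [a..<b])) \<and>
         walk_end hsrc htgt (X a) (fwd (map Aa [a..<b])) = X b" by simp
    have "[a..<Suc b] = [a..<b] @ [b]" using \<open>a \<le> b\<close> by simp
    then show ?thesis using ih Suc.prems \<open>a \<le> b\<close>
      by (simp add: fwd_append walk_ok_append walk_end_append)
         (auto simp: fwd_def QH_V_def QH_A_def lsrc_def ltgt_def)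
  qed
qed

lemma htpy_sym_trans_class:
  assumes "htpy Vs Ar src tgt I u v"
  shows "hclass Vs Ar src tgt I u = hclass Vs Ar src tgt I v"
  unfolding hclass_def using assms htpy.sym htpy.trans by blast

theorem mainTheorem4:
  fixes I :: "((hvert \<times> harrow list) \<Rightarrow> 'k::field) set" and n i j :: nat
  assumes "1 \<le> n" and "1 \<le> i" and "i < j" and "j \<le> n"
    and "admissible (QH_V n) (QH_A n) hsrc htgt I"
    and "minimal_relation (QH_V n) (QH_A n) hsrc htgt I (hrel i j)"
  shows "hclass (QH_V n) (QH_A n) hsrc htgt I (alpha_walk i)
       = hclass (QH_V n) (QH_A n) hsrc htgt I (alpha_walk j)"
proof -
  let ?V = "QH_V n" and ?A = "QH_A n"
  define P where "P = map Aa [1..<i]"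
  define M where "M = m_path i j"
  have mi: "m_path 0 i = P" by (simp add: P_def m_path_def)
  have "[1..<j] = [1..<i] @ [i] @ [Suc i..<j]"
    using assms upt_add_eq_append[of 1 i "j - i"] upt_conv_Cons[of i j] by simp
  then have mj: "m_path 0 j = P @ [Aa i] @ M" by (simp add: P_def M_def m_path_def)
  have wP: "walk_ok ?V ?A hsrc htgt (X 1) (fwd P) \<and> walk_end hsrc htgt (X 1) (fwd P) = X i"
    unfolding P_def using walk_aa[of 1 i n] assms by simp
  have wM: "walk_ok ?V ?A hsrc htgt (X (Suc i)) (fwd M) \<and> walk_end hsrc htgt (X (Suc i)) (fwd M) = X j"
    unfolding M_def m_path_def using walk_aa[of "Suc i" j n] assms by simp
  have inQ: "X i \<in> ?V" "X (Suc i) \<in> ?V" "X j \<in> ?V" "X (Suc j) \<in> ?V" "Y i \<in> ?V" "Y j \<in> ?V"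
    "Aa i \<in> ?A" "Aa j \<in> ?A" "R i \<in> ?A" "L i \<in> ?A" "R j \<in> ?A" "L j \<in> ?A"
    using assms by (auto simp: QH_V_def QH_A_def)
  define u where "u = fwd ([Aa i] @ M @ A_path j)"
  define u' where "u' = fwd (A_path i @ M @ [Aa j])"
  define w' where "w' = [(Aa j, False)] @ inv_walk (fwd (P @ [Aa i] @ M))"
  have aj: "alpha_walk j = (X 1, fwd P @ u @ w')"
    by (simp add: alpha_walk_def mj u_def w'_def T_walk_def fwd_def)
  have wu: "walk_ok ?V ?A hsrc htgt (X i) u \<and> walk_end hsrc htgt (X i) u = X (Suc j)"
    using wM inQ by (simp add: u_def fwd_def walk_ok_append walk_end_append A_path_def lsrc_def ltgt_def)
  have wu': "walk_ok ?V ?A hsrc htgt (X i) u' \<and> walk_end hsrc htgt (X i) u' = X (Suc j)"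
    using wM inQ by (simp add: u'_def fwd_def walk_ok_append walk_end_append A_path_def lsrc_def ltgt_def)
  have wPAM: "walk_ok ?V ?A hsrc htgt (X 1) (fwd (P @ [Aa i] @ M @ [Aa j])) \<and>
      walk_end hsrc htgt (X 1) (fwd (P @ [Aa i] @ M @ [Aa j])) = X (Suc j)"
    using wP wM inQ by (simp add: fwd_def walk_ok_append walk_end_append lsrc_def ltgt_def)
  have "inv_walk (fwd (P @ [Aa i] @ M @ [Aa j])) = w'"
    by (simp add: w'_def fwd_append inv_walk_append) (simp add: fwd_def inv_walk_def)
  then have ww': "walk_ok ?V ?A hsrc htgt (X (Suc j)) w'"
    using walk_ok_inv[of ?V ?A "X 1" "fwd (P @ [Aa i] @ M @ [Aa j])"] wPAM by simp
  have ok1: "walk_ok ?V ?A hsrc htgt (X 1) (fwd P @ u @ w')"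
    using wP wu ww' by (simp add: walk_ok_append walk_end_append)
  have ok2: "walk_ok ?V ?A hsrc htgt (X 1) (fwd P @ u' @ w')"
    using wP wu' ww' by (simp add: walk_ok_append walk_end_append)
  have sup: "(X i, [Aa i] @ M @ A_path j) \<in> supp (hrel i j :: _ \<Rightarrow> 'k)"
    "(X i, A_path i @ M @ [Aa j]) \<in> supp (hrel i j :: _ \<Rightarrow> 'k)"
    by (auto simp: supp_def hrel_def M_def)
  have r: "htpy ?V ?A hsrc htgt I (X i, u) (X i, u')"
    using htpy.rel[OF assms(6) sup] by (simp add: path_walk_def u_def u'_def fwd_def)
  have s1: "htpy ?V ?A hsrc htgt I (X 1, fwd P @ u @ w') (X 1, fwd P @ u' @ w')"
    using wP by (intro htpy.ctx[OF r ok1 ok2]) auto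
  have e2: "fwd P @ u' @ w' = (fwd P @ fwd (A_path i)) @ fwd (M @ [Aa j]) @ inv_walk (fwd (M @ [Aa j]))
       @ ([(Aa i, False)] @ inv_walk (fwd P))"
    by (simp add: u'_def w'_def fwd_append inv_walk_append) (simp add: fwd_def inv_walk_def)
  have s2: "htpy ?V ?A hsrc htgt I (X 1, fwd P @ u' @ w')
      (X 1, (fwd P @ fwd (A_path i)) @ ([(Aa i, False)] @ inv_walk (fwd P)))"
    unfolding e2 by (rule cancel_fwd) (use ok2 e2 in simp)
  have ai: "alpha_walk i = (X 1, (fwd P @ fwd (A_path i)) @ ([(Aa i, False)] @ inv_walk (fwd P)))"
    by (simp add: alpha_walk_def mi T_walk_def)
  have "htpy ?V ?A hsrc htgt I (alpha_walk j) (alpha_walk i)"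
    unfolding aj ai by (rule htpy.trans[OF s1 s2])
  then show ?thesis using htpy_sym_trans_class by metis
qed

end
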